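(* For every rational constant $0<c\le1$ and every $\varepsilon>0$ there is an instance of Maximum Coverage with $k=cn$ for which the ratio between the optimal integral value and the optimal value of the LP $$\max\Bigl\{\sum_{e\in E}w_ex_e : x_e\le\min\Bigl\{1,\sum_{i:e\in S_i}y_i\Bigr\}\ \forall e\in E,\ \sum_{i=1}^n y_i\le cn,\ y_i\ge0\ \forall i\in[n]\Bigr\}$$ is at most $(1+\varepsilon)\rho(c)$.
   Context: Maximum Coverage (MC): given a finite set of elements $E$ with weights $w\colon E\to\mathbb{R}_{\ge0}$, sets $S_1,\dots,S_n\subseteq E$ and an integer $k$, find $X\subseteq[n]$ with $|X|\le k$ maximizing $\sum_{e\in\bigcup_{i\in X}S_i}w_e$. Definition of $\rho(c)$: for $\alpha\in[0,1]$ and integer $m\ge1$ let $\sigma(\alpha,m)=\bigl(1-\alpha c-(1-\alpha)/m\bigr)^m$. If $c=1/s$ for some integer $s\ge1$, then $\rho(c)=1-(1-c)^{1/c}$. Otherwise $1/(s+1)<c<1/s$ for a unique integer $s\ge1$, there is a unique $\alpha^*\in(0,1)$ with $\sigma(\alpha^*,s)=\sigma(\alpha^*,s+1)$, and $\rho(c)=1-\sigma(\alpha^*,s)$. *)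

theory Defs
  imports Complex_Main
begin

definition sigma_mc :: "real \<Rightarrow> real \<Rightarrow> nat \<Rightarrow> real" where
  "sigma_mc c \<alpha> m = (1 - \<alpha> * c - (1 - \<alpha>) / real m) ^ m"

definition rho_mc :: "real \<Rightarrow> real" where
  "rho_mc c = (let s = nat \<lfloor>1 / c\<rfloor> in
     if c = 1 / real s then 1 - (1 - c) ^ s
     else 1 - sigma_mc c (THE \<alpha>. 0 < \<alpha> \<and> \<alpha> < 1 \<and> sigma_mc c \<alpha> s = sigma_mc c \<alpha> (s + 1)) s)"

definition mc_instance :: "nat set \<Rightarrow> (nat \<Rightarrow> real) \<Rightarrow> (nat \<Rightarrow> nat set) \<Rightarrow> nat \<Rightarrow> bool" where
  "mc_instance E w S n \<longleftrightarrow> finite E \<and> (\<forall>e\<in>E. 0 \<le> w e) \<and> (\<forall>i\<in>{1..n}. S i \<subseteq> E)"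

definition mc_opt :: "nat set \<Rightarrow> (nat \<Rightarrow> real) \<Rightarrow> (nat \<Rightarrow> nat set) \<Rightarrow> nat \<Rightarrow> nat \<Rightarrow> real" where
  "mc_opt E w S n k = Max {(\<Sum>e\<in>(\<Union>i\<in>X. S i). w e) | X. X \<subseteq> {1..n} \<and> card X \<le> k}"

definition mc_lp_opt :: "nat set \<Rightarrow> (nat \<Rightarrow> real) \<Rightarrow> (nat \<Rightarrow> nat set) \<Rightarrow> nat \<Rightarrow> real \<Rightarrow> real" where
  "mc_lp_opt E w S n K = Sup {(\<Sum>e\<in>E. w e * x e) | x y.
      (\<forall>e\<in>E. x e \<le> min 1 (\<Sum>i\<in>{i\<in>{1..n}. e \<in> S i}. y i))
    \<and> (\<Sum>i\<in>{1..n}. y i) \<le> K \<and> (\<forall>i\<in>{1..n}. 0 \<le> y i)}"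

end

theory Submission
  imports Defs "HOL-Library.Countable"
begin



lemma tangent_pow:
  fixes x a :: real
  assumes "0 \<le> x" "0 \<le> a"
  shows "x ^ m \<ge> a ^ m + real m * a ^ (m - 1) * (x - a)"
proof (induction m)
  case 0 then show ?case by simp
next
  case (Suc m)
  have "x ^ Suc m = x * x ^ m" by simp
  also have "\<dots> \<ge> x * (a ^ m + real m * a ^ (m - 1) * (x - a))"
    using Suc assms by (simp add: mult_left_mono)
  finally have h: "x ^ Suc m \<ge> x * (a ^ m + real m * a ^ (m - 1) * (x - a))" .
  have d: "x * (a ^ m + real m * a ^ (m - 1) * (x - a)) - (a ^ Suc m + real (Suc m) * a ^ m * (x - a))
      = real m * a ^ (m - 1) * (x - a)^2"
  proof (cases m)
    case 0 then show ?thesis by simp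
  next
    case (Suc j)
    then show ?thesis by (simp add: algebra_simps power2_eq_square)
  qed
  have "real m * a ^ (m - 1) * (x - a)^2 \<ge> 0" using assms by simp
  then show ?case using h d by simp
qed

lemma key_ineq:
  fixes s :: nat and c p q1 q2 r1 r2 :: real
  assumes s: "s \<ge> 1"
    and p: "0 < p" "p < 1"
    and q: "q1 \<le> 1" "q2 \<le> 1"
    and r: "r1 \<le> 1" "r2 \<le> 1"
    and root: "(1 - r1) ^ s = (1 - r2) ^ (s + 1)"
    and rsum: "p * r1 + (1 - p) * r2 = c"
    and budget: "p * q1 + (1 - p) * q2 \<le> c"
  defines "u \<equiv> real s * (1 - r1) ^ (s - 1) / p"
  defines "v \<equiv> real (s + 1) * (1 - r2) ^ s / (1 - p)"
  defines "\<beta> \<equiv> v / (u + v)"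
  shows "0 \<le> \<beta>" "\<beta> \<le> 1"
    "\<beta> * (1 - (1 - q1) ^ s) + (1 - \<beta>) * (1 - (1 - q2) ^ (s + 1)) \<le> 1 - (1 - r1) ^ s"
proof -
  have u0: "u \<ge> 0" unfolding u_def using p r by simp
  have v0: "v \<ge> 0" unfolding v_def using p r by simp
  show b0: "0 \<le> \<beta>" unfolding \<beta>_def using u0 v0 by simp
  show b1: "\<beta> \<le> 1" unfolding \<beta>_def using u0 v0 by (cases "u+v=0") (auto simp: divide_le_eq_1)
  define lam where "lam = u * v / (u + v)"
  have l0: "lam \<ge> 0" unfolding lam_def using u0 v0 by simp
  have bu: "\<beta> * u = lam" unfolding \<beta>_def lam_def by simp
  have bv: "(1 - \<beta>) * v = lam"
  proof (cases "u + v = 0")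
    case True then show ?thesis unfolding \<beta>_def lam_def using u0 v0 by simp
  next
    case False then show ?thesis unfolding \<beta>_def lam_def by (simp add: field_simps)
  qed
  have t1: "(1 - q1) ^ s \<ge> (1 - r1) ^ s + real s * (1 - r1) ^ (s - 1) * ((1 - q1) - (1 - r1))"
    by (rule tangent_pow) (use q r in auto)
  have t2: "(1 - q2) ^ (s+1) \<ge> (1 - r2) ^ (s+1) + real (s+1) * (1 - r2) ^ (s + 1 - 1) * ((1 - q2) - (1 - r2))"
    by (rule tangent_pow) (use q r in auto)
  have e1: "p * u = real s * (1 - r1) ^ (s - 1) \<or> p = 0" unfolding u_def by auto
  have A: "\<beta> * (1 - q1) ^ s \<ge> \<beta> * (1 - r1) ^ s - lam * p * (q1 - r1)"
  proof -
    have "real s * (1 - r1) ^ (s - 1) = p * u" unfolding u_def using p by simp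
    then have "(1 - q1) ^ s \<ge> (1 - r1) ^ s - p * u * (q1 - r1)" using t1 by (simp add: algebra_simps)
    then have "\<beta> * (1 - q1) ^ s \<ge> \<beta> * ((1 - r1) ^ s - p * u * (q1 - r1))" using b0 by (simp add: mult_left_mono)
    then show ?thesis by (simp add: bu[symmetric] algebra_simps)
  qed
  have B: "(1 - \<beta>) * (1 - q2) ^ (s+1) \<ge> (1 - \<beta>) * (1 - r2) ^ (s+1) - lam * (1 - p) * (q2 - r2)"
  proof -
    have eq: "real (s+1) * (1 - r2) ^ (s + 1 - 1) = (1 - p) * v" unfolding v_def using p by simp
    have "(1 - p) * v * ((1 - q2) - (1 - r2)) = - ((1 - p) * v * (q2 - r2))" by (simp add: algebra_simps)
    then have "(1 - q2) ^ (s+1) \<ge> (1 - r2) ^ (s+1) - (1 - p) * v * (q2 - r2)" using t2 unfolding eq by linarith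
    then have "(1 - \<beta>) * (1 - q2) ^ (s+1) \<ge> (1 - \<beta>) * ((1 - r2) ^ (s+1) - (1 - p) * v * (q2 - r2))"
      using b1 by (simp add: mult_left_mono)
    then show ?thesis by (simp add: bv[symmetric] algebra_simps)
  qed
  have "lam * (p * (q1 - r1) + (1 - p) * (q2 - r2)) \<le> 0"
  proof -
    have "p * (q1 - r1) + (1 - p) * (q2 - r2) \<le> 0" using budget rsum by (simp add: algebra_simps)
    then show ?thesis using l0 by (simp add: mult_nonneg_nonpos)
  qed
  then show "\<beta> * (1 - (1 - q1) ^ s) + (1 - \<beta>) * (1 - (1 - q2) ^ (s + 1)) \<le> 1 - (1 - r1) ^ s"
    using A B root by (simp add: algebra_simps)
qed




lemma s_bounds:
  fixes c :: real
  assumes "0 < c" "c \<le> 1"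
  defines "s \<equiv> nat \<lfloor>1 / c\<rfloor>"
  shows "s \<ge> 1" "real s \<le> 1 / c" "1 / c < real s + 1"
proof -
  have "1 / c \<ge> 1" using assms by simp
  then have f: "\<lfloor>1/c\<rfloor> \<ge> 1" by (metis floor_mono floor_one)
  have iss: "int s = \<lfloor>1/c\<rfloor>" using nat_0_le[of "\<lfloor>1/c\<rfloor>"] f unfolding s_def by linarith
  then show "s \<ge> 1" using f by linarith
  have "real s = real_of_int \<lfloor>1/c\<rfloor>" using iss by (metis of_int_of_nat_eq)
  then show "real s \<le> 1 / c" "1 / c < real s + 1" by linarith+
qed

lemma pow_incr_strict:
  fixes s :: nat assumes "s \<ge> 1"
  shows "(1 - 1 / real s) ^ s < (1 - 1 / real (s + 1)) ^ (s + 1)"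
proof (cases "s = 1")
  case True then show ?thesis by simp
next
  case False
  then have s2: "s \<ge> 2" using assms by simp
  have rs2: "real s \<ge> 2" using s2 by simp
  define x where "x = 1 - 1 / real s"
  define y where "y = 1 - 1 / real (s + 1)"
  have x0: "x > 0" unfolding x_def using rs2 by (simp add: field_simps)
  have y0: "y > 0" unfolding y_def using rs2 by (simp add: field_simps)
  have yx: "y - x = 1 / (real s * (real s + 1))" unfolding x_def y_def using rs2 by (simp add: field_simps)
  have t: "y ^ s \<ge> x ^ s + real s * x ^ (s - 1) * (y - x)"
  proof -
    have "\<And>m. y ^ m \<ge> x ^ m + real m * x ^ (m - 1) * (y - x)"
    proof -
      fix m :: nat
      show "y ^ m \<ge> x ^ m + real m * x ^ (m - 1) * (y - x)"
      proof (induction m)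
        case 0 then show ?case by simp
      next
        case (Suc m)
        have h: "y ^ Suc m \<ge> y * (x ^ m + real m * x ^ (m - 1) * (y - x))"
          using Suc y0 by (simp add: mult_left_mono)
        have d: "y * (x ^ m + real m * x ^ (m - 1) * (y - x)) - (x ^ Suc m + real (Suc m) * x ^ m * (y - x))
            = real m * x ^ (m - 1) * (y - x)^2"
        proof (cases m)
          case 0 then show ?thesis by simp
        next
          case (Suc j) then show ?thesis by (simp add: algebra_simps power2_eq_square)
        qed
        have "real m * x ^ (m - 1) * (y - x)^2 \<ge> 0" using x0 by simp
        then show ?case using h d by simp
      qed
    qed
    then show ?thesis .
  qed
  have "y ^ (s + 1) = y * y ^ s" by simp
  also have "\<dots> \<ge> y * (x ^ s + real s * x ^ (s - 1) * (y - x))" using t y0 by (simp add: mult_left_mono)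
  finally have h: "y ^ (s + 1) \<ge> y * (x ^ s + real s * x ^ (s - 1) * (y - x))" .
  have xs: "x ^ s = x * x ^ (s - 1)" using s2 by (metis Suc_diff_1 less_le_trans pos2 power_Suc)
  have "y * (x ^ s + real s * x ^ (s - 1) * (y - x)) - x ^ s
      = x ^ (s - 1) * ((y - 1) * x + real s * y * (y - x))" unfolding xs by (simp add: algebra_simps)
  also have "(y - 1) * x + real s * y * (y - x) = (y - x) / (real s + 1)"
  proof -
    have a: "real s \<noteq> 0" "real s + 1 \<noteq> 0" using rs2 by auto
    have e1: "y = real s/(real s+1)" unfolding y_def using a by (simp add: field_simps)
    have e2: "x = (real s - 1)/real s" unfolding x_def using a by (simp add: field_simps)
    show ?thesis unfolding e1 e2 using a by (simp add: divide_simps) (simp add: algebra_simps power2_eq_square)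
  qed
  finally have "y * (x ^ s + real s * x ^ (s - 1) * (y - x)) - x ^ s = x ^ (s - 1) * ((y - x) / (real s + 1))" .
  moreover have "x ^ (s - 1) * ((y - x) / (real s + 1)) > 0" using x0 yx s2 by simp
  ultimately show ?thesis using h unfolding x_def y_def by linarith
qed

lemma rho_root:
  fixes c :: real
  assumes c: "0 < c" "c \<le> 1"
  defines "s \<equiv> nat \<lfloor>1 / c\<rfloor>"
  assumes ne: "c \<noteq> 1 / real s"
  shows "1 / real (s + 1) < c" "c < 1 / real s"
    "\<exists>\<alpha>. 0 < \<alpha> \<and> \<alpha> < 1 \<and> sigma_mc c \<alpha> s = sigma_mc c \<alpha> (s + 1) \<and> rho_mc c = 1 - sigma_mc c \<alpha> s"
proof -
  have s1: "s \<ge> 1" and sl: "real s \<le> 1 / c" and su: "1 / c < real s + 1"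
    using s_bounds[OF c] unfolding s_def by auto
  have "real s \<noteq> 1 / c" using ne c s1 by (auto simp: field_simps)
  then have sl': "real s < 1 / c" using sl by simp
  show cl: "1 / real (s + 1) < c" using su c by (simp add: field_simps)
  show cu: "c < 1 / real s" using sl' c s1 by (simp add: field_simps)
  define f where "f = (\<lambda>\<alpha>. sigma_mc c \<alpha> s - sigma_mc c \<alpha> (s + 1))"
  have sig: "\<And>\<alpha> m. sigma_mc c \<alpha> m = (1 - \<alpha> * c - (1 - \<alpha>) / real m) ^ m" by (simp add: sigma_mc_def)
  have mono1: "sigma_mc c a s < sigma_mc c b s" if "0 \<le> a" "a < b" "b \<le> 1" for a b
  proof -
    have "0 \<le> 1 - a * c - (1 - a) / real s"
    proof -
      have "1 - a * c - (1 - a) / real s = (1 - 1 / real s) + a * (1 / real s - c)" by (simp add: algebra_simps diff_divide_distrib)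
      moreover have "1 / real s \<le> 1" using s1 by simp
      moreover have "a * (1 / real s - c) \<ge> 0" using that cu by simp
      ultimately show ?thesis by linarith
    qed
    moreover have "1 - a * c - (1 - a) / real s < 1 - b * c - (1 - b) / real s"
    proof -
      have "(1 - b * c - (1 - b) / real s) - (1 - a * c - (1 - a) / real s) = (b - a) * (1 / real s - c)"
        by (simp add: algebra_simps diff_divide_distrib)
      moreover have "(b - a) * (1 / real s - c) > 0" using that cu by simp
      ultimately show ?thesis by linarith
    qed
    ultimately show ?thesis unfolding sig using s1 by (intro power_strict_mono) auto
  qed
  have mono2: "sigma_mc c b (s+1) < sigma_mc c a (s+1)" if "0 \<le> a" "a < b" "b \<le> 1" for a b
  proof -
    have "0 \<le> 1 - b * c - (1 - b) / real (s+1)"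
    proof -
      have "1 - b * c - (1 - b) / real (s+1) = (1 - c) + (1 - b) * (c - 1 / real (s+1))" by (simp add: algebra_simps diff_divide_distrib)
      moreover have "c < 1" using cu s1
        by (smt (verit, ccfv_SIG) divide_le_eq_1 of_nat_1 of_nat_mono)
      moreover have "(1 - b) * (c - 1 / real (s+1)) \<ge> 0" using that cl by simp
      ultimately show ?thesis by linarith
    qed
    moreover have "1 - b * c - (1 - b) / real (s+1) < 1 - a * c - (1 - a) / real (s+1)"
    proof -
      have "(1 - a * c - (1 - a) / real (s+1)) - (1 - b * c - (1 - b) / real (s+1)) = (b - a) * (c - 1 / real (s+1))"
        by (simp add: algebra_simps diff_divide_distrib)
      moreover have "(b - a) * (c - 1 / real (s+1)) > 0" using that cl by simp
      ultimately show ?thesis by linarith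
    qed
    ultimately show ?thesis unfolding sig by (intro power_strict_mono) auto
  qed
  have fmono: "f a < f b" if "0 \<le> a" "a < b" "b \<le> 1" for a b
    using mono1[OF that] mono2[OF that] unfolding f_def by simp
  have c1: "c < 1" using cu s1
    by (smt (verit, ccfv_SIG) divide_le_eq_1 of_nat_1 of_nat_mono)
  have f0: "f 0 < 0" unfolding f_def sig using pow_incr_strict[OF s1] by simp
  have f1: "f 1 > 0"
  proof -
    have "f 1 = (1 - c) ^ s - (1 - c) ^ (s + 1)" unfolding f_def sig by simp
    also have "\<dots> = c * (1 - c) ^ s" by (simp add: algebra_simps)
    finally show ?thesis using c c1 by simp
  qed
  have cont: "continuous_on {0..1} f" unfolding f_def sig by (intro continuous_intros) (use s1 in auto)
  obtain \<alpha> where a: "0 \<le> \<alpha>" "\<alpha> \<le> 1" "f \<alpha> = 0"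
    using IVT'[of f 0 0 1] f0 f1 cont by auto
  have a0: "\<alpha> \<noteq> 0" using a f0 by auto
  have a1: "\<alpha> \<noteq> 1" using a f1 by auto
  have P: "0 < \<alpha> \<and> \<alpha> < 1 \<and> sigma_mc c \<alpha> s = sigma_mc c \<alpha> (s + 1)" using a a0 a1 unfolding f_def by auto
  have U: "\<And>\<beta>. 0 < \<beta> \<and> \<beta> < 1 \<and> sigma_mc c \<beta> s = sigma_mc c \<beta> (s + 1) \<Longrightarrow> \<beta> = \<alpha>"
  proof -
    fix \<beta> assume b: "0 < \<beta> \<and> \<beta> < 1 \<and> sigma_mc c \<beta> s = sigma_mc c \<beta> (s + 1)"
    then have fb: "f \<beta> = 0" unfolding f_def by simp
    show "\<beta> = \<alpha>"
    proof (rule ccontr)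
      assume "\<beta> \<noteq> \<alpha>"
      then consider "\<beta> < \<alpha>" | "\<alpha> < \<beta>" by linarith
      then show False
      proof cases
        case 1 then show False using fmono[of \<beta> \<alpha>] a b fb by auto
      next
        case 2 then show False using fmono[of \<alpha> \<beta>] a b fb by auto
      qed
    qed
  qed
  have the: "(THE \<alpha>. 0 < \<alpha> \<and> \<alpha> < 1 \<and> sigma_mc c \<alpha> s = sigma_mc c \<alpha> (s + 1)) = \<alpha>"
    using P U by (rule the_equality)
  have "rho_mc c = 1 - sigma_mc c \<alpha> s"
    unfolding rho_mc_def Let_def s_def[symmetric] using ne the by simp
  then show "\<exists>\<alpha>. 0 < \<alpha> \<and> \<alpha> < 1 \<and> sigma_mc c \<alpha> s = sigma_mc c \<alpha> (s + 1) \<and> rho_mc c = 1 - sigma_mc c \<alpha> s"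
    using P by blast
qed




lemma mc_opt_le:
  assumes "\<And>X. X \<subseteq> {1..n} \<Longrightarrow> card X \<le> k \<Longrightarrow> (\<Sum>e\<in>(\<Union>i\<in>X. S i). w e) \<le> R"
  shows "mc_opt E w S n k \<le> R"
proof -
  let ?M = "{(\<Sum>e\<in>(\<Union>i\<in>X. S i). w e) | X. X \<subseteq> {1..n} \<and> card X \<le> k}"
  have "?M = (\<lambda>X. (\<Sum>e\<in>(\<Union>i\<in>X. S i). w e)) ` {X. X \<subseteq> {1..n} \<and> card X \<le> k}" by auto
  moreover have "finite {X. X \<subseteq> {1..n} \<and> card X \<le> k}"
    by (rule finite_subset[of _ "Pow {1..n}"]) auto
  ultimately have fin: "finite ?M" by simp
  have ne: "?M \<noteq> {}" by (auto intro!: exI[of _ "{}"])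
  show ?thesis unfolding mc_opt_def using fin ne assms by (auto simp: Max_le_iff)
qed

lemma mc_lp_ge:
  assumes fin: "finite E" and w0: "\<forall>e\<in>E. 0 \<le> w e"
    and xc: "\<forall>e\<in>E. x e \<le> min 1 (\<Sum>i\<in>{i\<in>{1..n}. e \<in> S i}. y i)"
    and yb: "(\<Sum>i\<in>{1..n}. y i) \<le> K" and y0: "\<forall>i\<in>{1..n}. 0 \<le> y i"
  shows "(\<Sum>e\<in>E. w e * x e) \<le> mc_lp_opt E w S n K"
  unfolding mc_lp_opt_def
proof (rule cSup_upper)
  show "(\<Sum>e\<in>E. w e * x e) \<in> {(\<Sum>e\<in>E. w e * x e) | x y.
      (\<forall>e\<in>E. x e \<le> min 1 (\<Sum>i\<in>{i\<in>{1..n}. e \<in> S i}. y i))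
    \<and> (\<Sum>i\<in>{1..n}. y i) \<le> K \<and> (\<forall>i\<in>{1..n}. 0 \<le> y i)}"
    using xc yb y0 by blast
  show "bdd_above {(\<Sum>e\<in>E. w e * x e) | x y.
      (\<forall>e\<in>E. x e \<le> min 1 (\<Sum>i\<in>{i\<in>{1..n}. e \<in> S i}. y i))
    \<and> (\<Sum>i\<in>{1..n}. y i) \<le> K \<and> (\<forall>i\<in>{1..n}. 0 \<le> y i)}"
  proof (rule bdd_aboveI, clarify)
    fix x' :: "nat \<Rightarrow> real" and y'
    assume "\<forall>e\<in>E. x' e \<le> min 1 (\<Sum>i\<in>{i\<in>{1..n}. e \<in> S i}. y' i)"
    then have "\<forall>e\<in>E. x' e \<le> 1" by auto
    then show "(\<Sum>e\<in>E. w e * x' e) \<le> (\<Sum>e\<in>E. w e)"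
      using w0 by (intro sum_mono) (simp add: mult_left_le)
  qed
qed

definition fam :: "nat set \<Rightarrow> nat \<Rightarrow> nat list set" where
  "fam A m = {xs. set xs \<subseteq> A \<and> length xs = m}"

lemma fam_finite: "finite A \<Longrightarrow> finite (fam A m)"
  unfolding fam_def by (rule finite_lists_length_eq)

lemma fam_card: "finite A \<Longrightarrow> card (fam A m) = card A ^ m"
  unfolding fam_def by (rule card_lists_length_eq)

definition dfam :: "nat set \<Rightarrow> nat \<Rightarrow> nat list set" where
  "dfam A m = {xs. length xs = m \<and> distinct xs \<and> set xs \<subseteq> A}"

lemma dfam_card_ge:
  assumes "finite A" "m \<le> card A"
  shows "(real (card A) - real m) ^ m \<le> real (card (dfam A m))"
proof -
  let ?P = "card A"
  have "card (dfam A m) = \<Prod>{?P - m + 1 .. ?P}"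
    unfolding dfam_def using assms by (rule card_lists_distinct_length_eq)
  moreover have "(?P - m) ^ m \<le> \<Prod>{?P - m + 1 .. ?P}"
  proof -
    have "(\<Prod>i\<in>{?P - m + 1 .. ?P}. ?P - m) \<le> (\<Prod>i\<in>{?P - m + 1 .. ?P}. i)"
      by (rule prod_mono) auto
    moreover have "card {?P - m + 1 .. ?P} = m" using assms by simp
    ultimately show ?thesis by simp
  qed
  ultimately have "(?P - m) ^ m \<le> card (dfam A m)" by simp
  then have "real ((?P - m) ^ m) \<le> real (card (dfam A m))" by linarith
  then show ?thesis using assms by (simp add: of_nat_diff)
qed

lemma dfam_sub: "dfam A m \<subseteq> fam A m"
  unfolding dfam_def fam_def by auto




definition iL :: "nat \<Rightarrow> nat \<Rightarrow> nat \<Rightarrow> nat \<Rightarrow> nat list set" where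
  "iL P1 P2 m1 m2 = fam {1..P1} m1 \<union> fam {P1+1..P1+P2} m2"

definition iE :: "nat \<Rightarrow> nat \<Rightarrow> nat \<Rightarrow> nat \<Rightarrow> nat set" where
  "iE P1 P2 m1 m2 = to_nat ` iL P1 P2 m1 m2"

definition iw :: "nat \<Rightarrow> real \<Rightarrow> real \<Rightarrow> nat \<Rightarrow> real" where
  "iw m1 W1 W2 e = (if length (from_nat e :: nat list) = m1 then W1 else W2)"

definition iS :: "nat \<Rightarrow> nat \<Rightarrow> nat \<Rightarrow> nat \<Rightarrow> nat \<Rightarrow> nat set" where
  "iS P1 P2 m1 m2 i = to_nat ` {xs \<in> iL P1 P2 m1 m2. i \<in> set xs}"

lemma iL_finite: "finite (iL P1 P2 m1 m2)"
  unfolding iL_def by (auto intro: fam_finite)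

lemma inst_ok:
  assumes "0 \<le> W1" "0 \<le> W2"
  shows "mc_instance (iE P1 P2 m1 m2) (iw m1 W1 W2) (iS P1 P2 m1 m2) (P1 + P2)"
  unfolding mc_instance_def iE_def iS_def iw_def using assms iL_finite by auto

lemma sum_to_nat:
  fixes g :: "nat \<Rightarrow> real" and B :: "nat list set"
  shows "(\<Sum>e\<in>to_nat ` B. g e) = (\<Sum>xs\<in>B. g (to_nat xs))"
  by (rule sum.reindex_cong[of to_nat]) (auto intro: inj_on_subset[OF inj_to_nat])

lemma inst_cover:
  assumes m: "m1 \<noteq> m2"
  shows "(\<Sum>e\<in>(\<Union>i\<in>X. iS P1 P2 m1 m2 i). iw m1 W1 W2 e)
    = W1 * (real P1 ^ m1 - real (card ({1..P1} - X)) ^ m1)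
    + W2 * (real P2 ^ m2 - real (card ({P1+1..P1+P2} - X)) ^ m2)"
proof -
  define A1 where "A1 = {1..P1}"
  define A2 where "A2 = {P1+1..P1+P2}"
  define C1 where "C1 = fam A1 m1 - fam (A1 - X) m1"
  define C2 where "C2 = fam A2 m2 - fam (A2 - X) m2"
  have U: "(\<Union>i\<in>X. iS P1 P2 m1 m2 i) = to_nat ` (C1 \<union> C2)"
    unfolding iS_def iL_def C1_def C2_def A1_def A2_def fam_def by auto
  have fin1: "finite C1" "finite C2" unfolding C1_def C2_def A1_def A2_def by (auto intro: fam_finite)
  have disj: "C1 \<inter> C2 = {}" unfolding C1_def C2_def fam_def using m by auto
  have "(\<Sum>e\<in>(\<Union>i\<in>X. iS P1 P2 m1 m2 i). iw m1 W1 W2 e) = (\<Sum>xs\<in>C1 \<union> C2. iw m1 W1 W2 (to_nat xs))"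
    unfolding U by (rule sum_to_nat)
  also have "\<dots> = (\<Sum>xs\<in>C1. iw m1 W1 W2 (to_nat xs)) + (\<Sum>xs\<in>C2. iw m1 W1 W2 (to_nat xs))"
    using fin1 disj by (rule sum.union_disjoint)
  also have "(\<Sum>xs\<in>C1. iw m1 W1 W2 (to_nat xs)) = (\<Sum>xs\<in>C1. W1)"
    by (rule sum.cong) (auto simp: iw_def C1_def fam_def)
  also have "(\<Sum>xs\<in>C2. iw m1 W1 W2 (to_nat xs)) = (\<Sum>xs\<in>C2. W2)"
    by (rule sum.cong) (use m in \<open>auto simp: iw_def C2_def fam_def\<close>)
  finally have S: "(\<Sum>e\<in>(\<Union>i\<in>X. iS P1 P2 m1 m2 i). iw m1 W1 W2 e) = (\<Sum>xs\<in>C1. W1) + (\<Sum>xs\<in>C2. W2)" .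
  have k1: "real (card C1) = real P1 ^ m1 - real (card ({1..P1} - X)) ^ m1"
  proof -
    have "fam (A1 - X) m1 \<subseteq> fam A1 m1" unfolding fam_def by auto
    then have "card C1 = card (fam A1 m1) - card (fam (A1 - X) m1)"
      unfolding C1_def by (intro card_Diff_subset) (auto simp: A1_def intro: fam_finite)
    moreover have "card (fam (A1 - X) m1) \<le> card (fam A1 m1)"
      by (rule card_mono[OF fam_finite]) (auto simp: A1_def fam_def)
    ultimately show ?thesis by (simp add: of_nat_diff fam_card A1_def)
  qed
  have k2: "real (card C2) = real P2 ^ m2 - real (card ({P1+1..P1+P2} - X)) ^ m2"
  proof -
    have "fam (A2 - X) m2 \<subseteq> fam A2 m2" unfolding fam_def by auto
    then have "card C2 = card (fam A2 m2) - card (fam (A2 - X) m2)"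
      unfolding C2_def by (intro card_Diff_subset) (auto simp: A2_def intro: fam_finite)
    moreover have "card (fam (A2 - X) m2) \<le> card (fam A2 m2)"
      by (rule card_mono[OF fam_finite]) (auto simp: A2_def fam_def)
    ultimately show ?thesis by (simp add: of_nat_diff fam_card A2_def)
  qed
  show ?thesis unfolding S using k1 k2 by (simp add: mult.commute)
qed

lemma inst_lp:
  assumes m: "m1 \<noteq> m2" "m1 \<ge> 1" "m2 \<ge> 1" and W: "0 \<le> W1" "0 \<le> W2"
    and K: "real P1 / real m1 + real P2 / real m2 \<le> K"
  shows "W1 * real (card (dfam {1..P1} m1)) + W2 * real (card (dfam {P1+1..P1+P2} m2))
     \<le> mc_lp_opt (iE P1 P2 m1 m2) (iw m1 W1 W2) (iS P1 P2 m1 m2) (P1 + P2) K"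
proof -
  define A1 where "A1 = {1..P1}"
  define A2 where "A2 = {P1+1..P1+P2}"
  define D where "D = dfam A1 m1 \<union> dfam A2 m2"
  define y where "y = (\<lambda>i::nat. if i \<in> A1 then 1 / real m1 else 1 / real m2)"
  define x where "x = (\<lambda>e::nat. if (from_nat e :: nat list) \<in> D then 1 else (0::real))"
  have DL: "D \<subseteq> iL P1 P2 m1 m2" unfolding D_def iL_def A1_def A2_def using dfam_sub by blast
  have fin: "finite (iE P1 P2 m1 m2)" unfolding iE_def using iL_finite by simp
  have w0: "\<forall>e\<in>iE P1 P2 m1 m2. 0 \<le> iw m1 W1 W2 e" using W unfolding iw_def by auto
  have y0: "\<forall>i\<in>{1..P1+P2}. 0 \<le> y i" unfolding y_def by auto
  have yb: "(\<Sum>i\<in>{1..P1+P2}. y i) \<le> K"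
  proof -
    have sp: "{1..P1+P2} = A1 \<union> A2" "A1 \<inter> A2 = {}" unfolding A1_def A2_def by auto
    have "(\<Sum>i\<in>{1..P1+P2}. y i) = (\<Sum>i\<in>A1. y i) + (\<Sum>i\<in>A2. y i)"
      unfolding sp(1) by (rule sum.union_disjoint) (auto simp: A1_def A2_def sp(2))
    also have "(\<Sum>i\<in>A1. y i) = (\<Sum>i\<in>A1. 1 / real m1)" by (rule sum.cong) (auto simp: y_def)
    also have "(\<Sum>i\<in>A2. y i) = (\<Sum>i\<in>A2. 1 / real m2)" by (rule sum.cong) (auto simp: y_def A1_def A2_def)
    finally show ?thesis using K by (simp add: A1_def A2_def)
  qed
  have xc: "\<forall>e\<in>iE P1 P2 m1 m2. x e \<le> min 1 (\<Sum>i\<in>{i\<in>{1..P1+P2}. e \<in> iS P1 P2 m1 m2 i}. y i)"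
  proof
    fix e assume e: "e \<in> iE P1 P2 m1 m2"
    then obtain xs where xs: "xs \<in> iL P1 P2 m1 m2" "e = to_nat xs" unfolding iE_def by auto
    have idx: "{i\<in>{1..P1+P2}. e \<in> iS P1 P2 m1 m2 i} = set xs"
      using xs unfolding iS_def iL_def fam_def by (auto dest: injD[OF inj_to_nat])
    have s0: "0 \<le> (\<Sum>i\<in>set xs. y i)" unfolding y_def by (intro sum_nonneg) auto
    show "x e \<le> min 1 (\<Sum>i\<in>{i\<in>{1..P1+P2}. e \<in> iS P1 P2 m1 m2 i}. y i)"
    proof (cases "xs \<in> D")
      case False then show ?thesis unfolding idx x_def using xs s0 by simp
    next
      case True
      then consider "xs \<in> dfam A1 m1" | "xs \<in> dfam A2 m2" unfolding D_def by auto
      then have "(\<Sum>i\<in>set xs. y i) = 1"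
      proof cases
        case 1
        then have "(\<Sum>i\<in>set xs. y i) = (\<Sum>i\<in>set xs. 1 / real m1)"
          unfolding dfam_def by (intro sum.cong) (auto simp: y_def)
        also have "\<dots> = 1" using 1 m unfolding dfam_def by (simp add: distinct_card)
        finally show ?thesis .
      next
        case 2
        then have "(\<Sum>i\<in>set xs. y i) = (\<Sum>i\<in>set xs. 1 / real m2)"
          unfolding dfam_def by (intro sum.cong) (auto simp: y_def A1_def A2_def)
        also have "\<dots> = 1" using 2 m unfolding dfam_def by (simp add: distinct_card)
        finally show ?thesis .
      qed
      then show ?thesis unfolding idx x_def using xs by simp
    qed
  qed
  have "(\<Sum>e\<in>iE P1 P2 m1 m2. iw m1 W1 W2 e * x e) \<le> mc_lp_opt (iE P1 P2 m1 m2) (iw m1 W1 W2) (iS P1 P2 m1 m2) (P1 + P2) K"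
    by (rule mc_lp_ge[OF fin w0 xc yb y0])
  moreover have "(\<Sum>e\<in>iE P1 P2 m1 m2. iw m1 W1 W2 e * x e) = W1 * real (card (dfam A1 m1)) + W2 * real (card (dfam A2 m2))"
  proof -
    have "(\<Sum>e\<in>iE P1 P2 m1 m2. iw m1 W1 W2 e * x e) = (\<Sum>xs\<in>iL P1 P2 m1 m2. iw m1 W1 W2 (to_nat xs) * x (to_nat xs))"
      unfolding iE_def by (rule sum_to_nat)
    also have "\<dots> = (\<Sum>xs\<in>D. iw m1 W1 W2 (to_nat xs))"
      by (rule sum.mono_neutral_cong_right) (use iL_finite DL in \<open>auto simp: x_def\<close>)
    also have "\<dots> = (\<Sum>xs\<in>dfam A1 m1. iw m1 W1 W2 (to_nat xs)) + (\<Sum>xs\<in>dfam A2 m2. iw m1 W1 W2 (to_nat xs))"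
      unfolding D_def
    proof (rule sum.union_disjoint)
      show "finite (dfam A1 m1)" "finite (dfam A2 m2)"
        using finite_subset[OF dfam_sub fam_finite] by (auto simp: A1_def A2_def)
      show "dfam A1 m1 \<inter> dfam A2 m2 = {}" using m unfolding dfam_def by auto
    qed
    also have "(\<Sum>xs\<in>dfam A1 m1. iw m1 W1 W2 (to_nat xs)) = (\<Sum>xs\<in>dfam A1 m1. W1)"
      by (rule sum.cong) (auto simp: iw_def dfam_def)
    also have "(\<Sum>xs\<in>dfam A2 m2. iw m1 W1 W2 (to_nat xs)) = (\<Sum>xs\<in>dfam A2 m2. W2)"
      by (rule sum.cong) (use m in \<open>auto simp: iw_def dfam_def\<close>)
    finally show ?thesis by (simp add: mult.commute)
  qed
  ultimately show ?thesis unfolding A1_def A2_def by simp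
qed




lemma frac_ge:
  assumes "finite A" "card A = P" "0 < P" "m \<le> P" "0 \<le> \<beta>"
  shows "\<beta> * (1 - real m * real m / real P) \<le> \<beta> / real P ^ m * real (card (dfam A m))"
proof -
  have Pp: "real P > 0" using assms by simp
  have "(real P - real m) ^ m \<le> real (card (dfam A m))" using dfam_card_ge[of A m] assms by simp
  then have h: "(real P - real m) ^ m / real P ^ m \<le> real (card (dfam A m)) / real P ^ m"
    using Pp by (simp add: divide_right_mono)
  have "(real P - real m) ^ m / real P ^ m = (1 + (- (real m / real P))) ^ m"
    using Pp by (simp add: power_divide[symmetric] diff_divide_distrib)
  moreover have "1 + real m * (- (real m / real P)) \<le> (1 + (- (real m / real P))) ^ m"
    by (rule Bernoulli_inequality) (use assms Pp in simp)
  ultimately have "1 - real m * real m / real P \<le> real (card (dfam A m)) / real P ^ m"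
    using h by simp
  then have "\<beta> * (1 - real m * real m / real P) \<le> \<beta> * (real (card (dfam A m)) / real P ^ m)"
    by (rule mult_left_mono) (use assms in simp)
  then show ?thesis by simp
qed

lemma ratio_final:
  fixes opt lp R \<delta> \<epsilon> :: real
  assumes "opt \<le> R" "1 - \<delta> \<le> lp" "0 \<le> R" "0 < \<epsilon>" "0 \<le> \<delta>" "\<delta> \<le> \<epsilon> / (1 + \<epsilon>)"
  shows "0 < lp" "opt / lp \<le> (1 + \<epsilon>) * R"
proof -
  have d1: "\<delta> < 1" using assms by (smt (verit) divide_less_eq_1_pos)
  then show lp: "0 < lp" using assms by linarith
  have "opt / lp \<le> R / lp" using assms lp by (simp add: divide_right_mono)
  also have "\<dots> \<le> R / (1 - \<delta>)"
  proof (rule divide_left_mono)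
    show "1 - \<delta> \<le> lp" "0 \<le> R" using assms by auto
    show "0 < lp * (1 - \<delta>)" using lp d1 by simp
  qed
  also have "\<dots> \<le> (1 + \<epsilon>) * R"
  proof -
    have "\<delta> * (1 + \<epsilon>) \<le> \<epsilon>" using assms by (simp add: pos_le_divide_eq)
    then have g: "1 \<le> (1 + \<epsilon>) * (1 - \<delta>)" by (simp add: algebra_simps)
    have "R * 1 \<le> R * ((1 + \<epsilon>) * (1 - \<delta>))" by (rule mult_left_mono[OF g]) (use assms in simp)
    then have "R \<le> (1 + \<epsilon>) * R * (1 - \<delta>)" by (simp add: algebra_simps)
    then show ?thesis using d1 by (simp add: pos_divide_le_eq)
  qed
  finally show "opt / lp \<le> (1 + \<epsilon>) * R" .
qed

lemma card_split:
  assumes "finite X"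
  shows "int (card ({1..P1} - X)) + int (card ({P1+1..P1+P2} - X)) \<ge> int P1 + int P2 - int (card X)"
    "card ({1..P1} - X) \<le> P1" "card ({P1+1..P1+P2} - X) \<le> P2"
proof -
  have "({1..P1} - X) \<union> ({P1+1..P1+P2} - X) = {1..P1+P2} - X" by auto
  moreover have "card (({1..P1} - X) \<union> ({P1+1..P1+P2} - X)) = card ({1..P1} - X) + card ({P1+1..P1+P2} - X)"
    by (rule card_Un_disjoint) auto
  moreover have "card ({1..P1+P2} - X) \<ge> card {1..P1+P2} - card X" by (rule diff_card_le_card_Diff) (rule assms)
  ultimately show "int (card ({1..P1} - X)) + int (card ({P1+1..P1+P2} - X)) \<ge> int P1 + int P2 - int (card X)"
    by simp
  show "card ({1..P1} - X) \<le> P1" using card_mono[of "{1..P1}" "{1..P1} - X"] by auto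
  show "card ({P1+1..P1+P2} - X) \<le> P2" using card_mono[of "{P1+1..P1+P2}" "{P1+1..P1+P2} - X"] by auto
qed

lemma conclude:
  fixes c \<epsilon> \<delta> R WA WB :: real
  assumes W: "0 \<le> WA" "0 \<le> WB" and m: "ma \<noteq> mb" "ma \<ge> 1" "mb \<ge> 1"
    and n1: "PA + PB \<ge> 1" and kc: "real k = c * real (PA + PB)"
    and K: "real PA / real ma + real PB / real mb \<le> real k"
    and cov: "\<And>X. X \<subseteq> {1..PA+PB} \<Longrightarrow> card X \<le> k \<Longrightarrow>
       WA * (real PA ^ ma - real (card ({1..PA} - X)) ^ ma)
     + WB * (real PB ^ mb - real (card ({PA+1..PA+PB} - X)) ^ mb) \<le> R"
    and lpb: "1 - \<delta> \<le> WA * real (card (dfam {1..PA} ma)) + WB * real (card (dfam {PA+1..PA+PB} mb))"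
    and R: "0 \<le> R" and e: "0 < \<epsilon>" "0 \<le> \<delta>" "\<delta> \<le> \<epsilon> / (1 + \<epsilon>)"
  shows "\<exists>(E::nat set) (w::nat \<Rightarrow> real) (S::nat \<Rightarrow> nat set) (n::nat) (k::nat).
           n \<ge> 1 \<and> mc_instance E w S n \<and> real k = c * real n
         \<and> 0 < mc_lp_opt E w S n (real k)
         \<and> mc_opt E w S n k / mc_lp_opt E w S n (real k) \<le> (1 + \<epsilon>) * R"
proof -
  let ?E = "iE PA PB ma mb" and ?w = "iw ma WA WB" and ?S = "iS PA PB ma mb" and ?n = "PA + PB"
  have o: "mc_opt ?E ?w ?S ?n k \<le> R"
  proof (rule mc_opt_le)
    fix X assume "X \<subseteq> {1..PA+PB}" "card X \<le> k"
    then show "(\<Sum>e\<in>(\<Union>i\<in>X. ?S i). ?w e) \<le> R" unfolding inst_cover[OF m(1)] by (rule cov)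
  qed
  have l: "1 - \<delta> \<le> mc_lp_opt ?E ?w ?S ?n (real k)"
    using inst_lp[OF m W K] lpb by linarith
  have "0 < mc_lp_opt ?E ?w ?S ?n (real k)" "mc_opt ?E ?w ?S ?n k / mc_lp_opt ?E ?w ?S ?n (real k) \<le> (1 + \<epsilon>) * R"
    using ratio_final[OF o l R e] by auto
  then show ?thesis using n1 kc inst_ok[OF W, of PA PB ma mb] by blast
qed

lemma delta_facts:
  fixes \<epsilon> :: real
  assumes e: "0 < \<epsilon>" and d: "real (s+1)^2 / real t \<le> \<epsilon> / (1 + \<epsilon>)" and t: "t \<ge> 1"
    and P: "P \<ge> t" and m: "m \<le> s + 1"
  shows "m \<le> P" "0 < P" "real m * real m / real P \<le> real (s+1)^2 / real t"
proof -
  have "\<epsilon> / (1 + \<epsilon>) < 1" using e by simp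
  then have "real (s+1)^2 / real t < 1" using d by linarith
  then have "real (s+1)^2 < real t" using t by (simp add: divide_less_eq)
  then have "(s+1)^2 < t" by (metis of_nat_less_iff of_nat_power)
  moreover have "s + 1 \<le> (s+1)^2" by (simp add: power2_eq_square)
  ultimately show "m \<le> P" using m P by linarith
  show "0 < P" using t P by simp
  have "real m * real m \<le> real (s+1)^2" using m by (simp add: power2_eq_square mult_mono)
  moreover have "real t \<le> real P" using P by simp
  ultimately show "real m * real m / real P \<le> real (s+1)^2 / real t"
    using t by (intro frac_le) auto
qed

lemma case1:
  fixes c \<epsilon> :: real and s t a b :: nat
  assumes c: "0 < c" "c \<le> 1" "c = 1 / real s" "s \<ge> 1"
    and ab: "c = real a / real b" "b \<noteq> 0" and t: "t \<ge> 1"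
    and d: "real (s+1)^2 / real t \<le> \<epsilon> / (1 + \<epsilon>)" and e: "0 < \<epsilon>"
  shows "\<exists>(E::nat set) (w::nat \<Rightarrow> real) (S::nat \<Rightarrow> nat set) (n::nat) (k::nat).
           n \<ge> 1 \<and> mc_instance E w S n \<and> real k = c * real n
         \<and> 0 < mc_lp_opt E w S n (real k)
         \<and> mc_opt E w S n k / mc_lp_opt E w S n (real k) \<le> (1 + \<epsilon>) * (1 - (1 - c) ^ s)"
proof -
  define N where "N = b * t"
  have Nt: "N \<ge> t" unfolding N_def using ab by simp
  have df: "s \<le> N" "0 < N" "real s * real s / real N \<le> real (s+1)^2 / real t"
    using delta_facts[OF e d t Nt, of s] by auto
  have Np: "real N > 0" using df by simp
  have kc: "real (a * t) = c * real N" unfolding N_def using ab by simp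
  have kN: "real N / real s = real (a * t)" using kc c by simp
  show ?thesis
  proof (rule conclude[where PA = N and PB = 0 and ma = s and mb = "s+1" and WA = "1 / real N ^ s" and WB = 0
        and k = "a * t" and \<delta> = "real (s+1)^2 / real t"])
    show "0 \<le> 1 / real N ^ s" "(0::real) \<le> 0" "s \<noteq> s + 1" "s \<ge> 1" "s + 1 \<ge> 1" using c by auto
    show "N + 0 \<ge> 1" using df by simp
    show "real (a * t) = c * real (N + 0)" using kc by simp
    show "real N / real s + real 0 / real (s + 1) \<le> real (a * t)" using kN by simp
    show "0 < \<epsilon>" "0 \<le> real (s+1)^2 / real t" "real (s+1)^2 / real t \<le> \<epsilon> / (1 + \<epsilon>)" using e d by auto
    show "0 \<le> 1 - (1 - c) ^ s" using c by (simp add: power_le_one)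
    show "1 - real (s + 1)^2 / real t \<le> 1 / real N ^ s * real (card (dfam {1..N} s)) + 0 * real (card (dfam {N + 1..N + 0} (s + 1)))"
      using frac_ge[of "{1..N}" N s 1] df by simp
    fix X assume X: "X \<subseteq> {1..N + 0}" "card X \<le> a * t"
    define dd where "dd = card ({1..N} - X)"
    have fX: "finite X" using X finite_subset by blast
    have "int dd + int (card ({N+1..N+0} - X)) \<ge> int N + int 0 - int (card X)"
      using card_split(1)[OF fX, of N 0] unfolding dd_def by simp
    moreover have "card ({N+1..N+0} - X) = 0" by simp
    ultimately have "real dd \<ge> real N - real (a * t)" using X by linarith
    then have "real dd / real N \<ge> 1 - c" using kc Np by (simp add: field_simps)
    moreover have "0 \<le> 1 - c" using c by simp
    ultimately have "(1 - c) ^ s \<le> (real dd / real N) ^ s" by (rule power_mono)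
    moreover have "1 / real N ^ s * (real N ^ s - real dd ^ s) = 1 - (real dd / real N) ^ s"
      using Np by (simp add: field_simps power_divide)
    ultimately show "1 / real N ^ s * (real N ^ s - real (card ({1..N} - X)) ^ s)
       + 0 * (real 0 ^ (s + 1) - real (card ({N + 1..N + 0} - X)) ^ (s + 1)) \<le> 1 - (1 - c) ^ s"
      unfolding dd_def by simp
  qed
qed

lemma case2:
  fixes c \<epsilon> \<alpha> :: real and s t a b :: nat
  assumes s1: "s \<ge> 1" and cl: "1 / real (s + 1) < c" and cu: "c < 1 / real s"
    and ab: "c = real a / real b" "b \<noteq> 0" and t: "t \<ge> 1"
    and d: "real (s+1)^2 / real t \<le> \<epsilon> / (1 + \<epsilon>)" and e: "0 < \<epsilon>"
    and al: "0 < \<alpha>" "\<alpha> < 1" and root: "sigma_mc c \<alpha> s = sigma_mc c \<alpha> (s + 1)"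
  shows "\<exists>(E::nat set) (w::nat \<Rightarrow> real) (S::nat \<Rightarrow> nat set) (n::nat) (k::nat).
           n \<ge> 1 \<and> mc_instance E w S n \<and> real k = c * real n
         \<and> 0 < mc_lp_opt E w S n (real k)
         \<and> mc_opt E w S n k / mc_lp_opt E w S n (real k) \<le> (1 + \<epsilon>) * (1 - sigma_mc c \<alpha> s)"
proof -
  have bp: "real b > 0" using ab by simp
  have rs: "real s \<ge> 1" using s1 by simp
  have h1: "real b < real (s+1) * real a"
  proof -
    have "1 / real (s+1) < real a / real b" using cl ab by simp
    then show ?thesis using bp by (simp add: field_simps)
  qed
  have h2: "real s * real a < real b"
  proof -
    have "real a / real b < 1 / real s" using cu ab by simp
    then show ?thesis using bp rs by (simp add: field_simps)
  qed
  have nb: "b \<le> (s+1) * a"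
  proof -
    have "real b \<le> real ((s+1) * a)" using h1 by (simp add: algebra_simps)
    then show ?thesis by (simp only: of_nat_le_iff)
  qed
  define u1 where "u1 = s * ((s+1) * a - b)"
  have rdf: "real ((s+1)*a - b) = real ((s+1)*a) - real b" by (rule of_nat_diff[OF nb])
  have ru1: "real u1 = real s * (real (s+1) * real a - real b)" unfolding u1_def of_nat_mult rdf by simp
  have u1b: "real u1 < real b"
  proof -
    have "real s * (real (s+1) * real a - real b) < real b"
    proof -
      have "real s * (real (s+1) * real a - real b) - real b = (real s + 1) * (real s * real a - real b)"
        by (simp add: algebra_simps)
      moreover have "(real s + 1) * (real s * real a - real b) < 0" using h2 by (simp add: mult_pos_neg)
      ultimately show ?thesis by linarith
    qed
    then show ?thesis using ru1 by simp
  qed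
  have u1p: "real u1 \<ge> 1"
  proof -
    have "real (s+1) * real a - real b \<ge> 1"
    proof -
      have "real b < real ((s+1) * a)" using h1 by (simp add: algebra_simps)
      then have "b < (s+1) * a" by (simp only: of_nat_less_iff)
      then have "b + 1 \<le> (s+1) * a" by simp
      then have "real (b + 1) \<le> real ((s+1) * a)" by (rule of_nat_mono)
      then show ?thesis by (simp add: algebra_simps)
    qed
    then have "1 * 1 \<le> real s * (real (s+1) * real a - real b)" using rs by (intro mult_mono) auto
    then show ?thesis using ru1 by simp
  qed
  define u2 where "u2 = b - u1"
  have u1lb: "u1 < b" using u1b by simp
  have ru2: "real u2 = real b - real u1" unfolding u2_def using u1lb by (simp add: of_nat_diff)
  have u2p: "real u2 \<ge> 1"
  proof -
    have "u1 + 1 \<le> b" using u1lb by simp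
    then show ?thesis unfolding u2_def using u1lb by simp
  qed
  define P1 where "P1 = u1 * t"
  define P2 where "P2 = u2 * t"
  have P12: "P1 + P2 = b * t" unfolding P1_def P2_def u2_def using u1lb by (simp add: add_mult_distrib[symmetric])
  have rt: "real t \<ge> 1" using t by simp
  have u1n: "u1 \<ge> 1" using u1p by simp
  have u2n: "u2 \<ge> 1" using u2p by simp
  have P1t: "P1 \<ge> t" unfolding P1_def using u1n by simp
  have P2t: "P2 \<ge> t" unfolding P2_def using u2n by simp
  define N where "N = b * t"
  have rN: "real N = real b * real t" unfolding N_def by simp
  have Np: "real N > 0" using rN bp rt by simp
  have rP12: "real P1 + real P2 = real N" unfolding N_def P12[symmetric] by simp
  define p where "p = real u1 / real b"
  have p01: "0 < p" "p < 1" unfolding p_def using u1p u1b bp by auto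
  have rP1: "real P1 = p * real N" unfolding P1_def p_def rN using bp by simp
  have rP2: "real P2 = (1 - p) * real N" unfolding P2_def of_nat_mult ru2 p_def rN using bp by (simp add: field_simps)
  have pc: "p = real s * (real (s+1) * c - 1)" unfolding p_def ru1 ab using bp by (simp add: field_simps)
  have pbud: "p / real s + (1 - p) / real (s+1) = c"
  proof -
    have sp: "real s \<noteq> 0" "real s + 1 \<noteq> 0" using rs by auto
    show ?thesis unfolding pc using sp by (simp add: divide_simps) (simp add: algebra_simps)
  qed
  have kc: "real (a * t) = c * real N" unfolding rN ab using bp by simp
  define r1 where "r1 = \<alpha> * c + (1 - \<alpha>) / real s"
  define r2 where "r2 = \<alpha> * c + (1 - \<alpha>) / real (s+1)"
  have c1: "c < 1" using cu rs by (smt (verit) divide_le_eq_1)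
  have c0: "0 < c" using cl by (smt (verit) divide_pos_pos of_nat_0_less_iff zero_less_Suc Suc_eq_plus1)
  have r1le: "r1 \<le> 1" "0 \<le> r1"
  proof -
    have "r1 \<le> \<alpha> * 1 + (1 - \<alpha>) * 1" unfolding r1_def using al c1 rs
      by (intro add_mono mult_left_mono) (auto simp: divide_le_eq)
    then show "r1 \<le> 1" by simp
    show "0 \<le> r1" unfolding r1_def using al c0 rs by simp
  qed
  have r2le: "r2 \<le> 1"
  proof -
    have "r2 \<le> \<alpha> * 1 + (1 - \<alpha>) * 1" unfolding r2_def using al c1
      by (intro add_mono mult_left_mono) (auto simp: divide_le_eq)
    then show "r2 \<le> 1" by simp
  qed
  have sig1: "sigma_mc c \<alpha> s = (1 - r1) ^ s" unfolding sigma_mc_def r1_def by (simp add: algebra_simps)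
  have sig2: "sigma_mc c \<alpha> (s+1) = (1 - r2) ^ (s+1)" unfolding sigma_mc_def r2_def by (simp add: algebra_simps)
  have root': "(1 - r1) ^ s = (1 - r2) ^ (s + 1)" using root sig1 sig2 by simp
  have rsum: "p * r1 + (1 - p) * r2 = c"
  proof -
    have "p * r1 + (1 - p) * r2 = \<alpha> * c + (1 - \<alpha>) * (p / real s + (1 - p) / real (s+1))"
      unfolding r1_def r2_def by (simp add: algebra_simps)
    then show ?thesis unfolding pbud by (simp add: algebra_simps)
  qed
  define uu where "uu = real s * (1 - r1) ^ (s - 1) / p"
  define vv where "vv = real (s + 1) * (1 - r2) ^ s / (1 - p)"
  define \<beta> where "\<beta> = vv / (uu + vv)"
  have b01: "0 \<le> \<beta>" "\<beta> \<le> 1"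
  proof -
    have bud0: "p * 0 + (1 - p) * 0 \<le> c" using c0 by simp
    show "0 \<le> \<beta>" "\<beta> \<le> 1" unfolding \<beta>_def uu_def vv_def
      using key_ineq(1,2)[OF s1 p01 zero_le_one zero_le_one r1le(1) r2le root' rsum bud0] by auto
  qed
  have KI: "\<beta> * (1 - (1 - x) ^ s) + (1 - \<beta>) * (1 - (1 - y) ^ (s + 1)) \<le> 1 - (1 - r1) ^ s"
    if "x \<le> 1" "y \<le> 1" "p * x + (1 - p) * y \<le> c" for x y
    unfolding \<beta>_def uu_def vv_def by (rule key_ineq(3)[OF s1 p01 that(1,2) r1le(1) r2le root' rsum that(3)])
  have dfs: "s \<le> P1" "0 < P1" "real s * real s / real P1 \<le> real (s+1)^2 / real t"
    using delta_facts[OF e d t P1t, of s] by auto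
  have dfs2: "s + 1 \<le> P2" "0 < P2" "real (s+1) * real (s+1) / real P2 \<le> real (s+1)^2 / real t"
    using delta_facts[OF e d t P2t, of "s+1"] by auto
  have "\<exists>(E::nat set) (w::nat \<Rightarrow> real) (S::nat \<Rightarrow> nat set) (n::nat) (k::nat).
           n \<ge> 1 \<and> mc_instance E w S n \<and> real k = c * real n
         \<and> 0 < mc_lp_opt E w S n (real k)
         \<and> mc_opt E w S n k / mc_lp_opt E w S n (real k) \<le> (1 + \<epsilon>) * (1 - (1 - r1) ^ s)"
  proof (rule conclude[where PA = P1 and PB = P2 and ma = s and mb = "s+1" and WA = "\<beta> / real P1 ^ s"
        and WB = "(1 - \<beta>) / real P2 ^ (s+1)" and k = "a * t" and \<delta> = "real (s+1)^2 / real t"])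
    show "0 \<le> \<beta> / real P1 ^ s" "0 \<le> (1 - \<beta>) / real P2 ^ (s+1)" using b01 by auto
    show "s \<noteq> s + 1" "s \<ge> 1" "s + 1 \<ge> 1" using s1 by auto
    show "P1 + P2 \<ge> 1" using dfs by simp
    show "real (a * t) = c * real (P1 + P2)" using kc P12 N_def by simp
    show "real P1 / real s + real P2 / real (s + 1) \<le> real (a * t)"
    proof -
      have "real P1 / real s + real P2 / real (s + 1) = real N * (p / real s + (1 - p) / real (s+1))"
        unfolding rP1 rP2 by (simp add: algebra_simps)
      then show ?thesis unfolding pbud kc by simp
    qed
    show "0 < \<epsilon>" "0 \<le> real (s+1)^2 / real t" "real (s+1)^2 / real t \<le> \<epsilon> / (1 + \<epsilon>)" using e d by auto
    show "0 \<le> 1 - (1 - r1) ^ s" using r1le by (simp add: power_le_one)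
    show "1 - real (s + 1)^2 / real t \<le> \<beta> / real P1 ^ s * real (card (dfam {1..P1} s))
        + (1 - \<beta>) / real P2 ^ (s+1) * real (card (dfam {P1 + 1..P1 + P2} (s + 1)))"
    proof -
      have A: "\<beta> * (1 - real s * real s / real P1) \<le> \<beta> / real P1 ^ s * real (card (dfam {1..P1} s))"
        using frac_ge[of "{1..P1}" P1 s \<beta>] dfs b01 by simp
      have B: "(1 - \<beta>) * (1 - real (s+1) * real (s+1) / real P2) \<le> (1 - \<beta>) / real P2 ^ (s+1) * real (card (dfam {P1 + 1..P1 + P2} (s + 1)))"
        using frac_ge[of "{P1 + 1..P1 + P2}" P2 "s+1" "1 - \<beta>"] dfs2 b01 by simp
      have A': "\<beta> * (1 - real (s + 1)^2 / real t) \<le> \<beta> * (1 - real s * real s / real P1)"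
        using dfs b01 by (intro mult_left_mono) auto
      have B': "(1 - \<beta>) * (1 - real (s + 1)^2 / real t) \<le> (1 - \<beta>) * (1 - real (s+1) * real (s+1) / real P2)"
        using dfs2 b01 by (intro mult_left_mono) auto
      have gen: "\<And>D::real. 1 - D = \<beta> * (1 - D) + (1 - \<beta>) * (1 - D)" by (simp add: algebra_simps)
      have "1 - real (s + 1)^2 / real t = \<beta> * (1 - real (s + 1)^2 / real t) + (1 - \<beta>) * (1 - real (s + 1)^2 / real t)"
        by (rule gen)
      then show ?thesis using A B A' B' by linarith
    qed
    fix X assume X: "X \<subseteq> {1..P1 + P2}" "card X \<le> a * t"
    define d1 where "d1 = card ({1..P1} - X)"
    define d2 where "d2 = card ({P1+1..P1+P2} - X)"
    have fX: "finite X" using X finite_subset by blast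
    have cs: "int d1 + int d2 \<ge> int P1 + int P2 - int (card X)" "d1 \<le> P1" "d2 \<le> P2"
      using card_split(1)[OF fX, of P1 P2] card_split(2)[OF fX, of P1] card_split(3)[OF fX, of P1 P2] unfolding d1_def d2_def by auto
    have sumd: "real d1 + real d2 \<ge> real N - real (a * t)"
    proof -
      have "int d1 + int d2 \<ge> int P1 + int P2 - int (a * t)" using cs X by linarith
      then have "real_of_int (int d1 + int d2) \<ge> real_of_int (int P1 + int P2 - int (a * t))" by linarith
      then show ?thesis using rP12 by simp
    qed
    have P1p: "real P1 > 0" "real P2 > 0" using dfs dfs2 by auto
    define x where "x = 1 - real d1 / real P1"
    define y where "y = 1 - real d2 / real P2"
    have xy: "x \<le> 1" "y \<le> 1" unfolding x_def y_def using P1p by auto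
    have bud: "p * x + (1 - p) * y \<le> c"
    proof -
      have pN: "p = real P1 / real N" "1 - p = real P2 / real N" using rP1 rP2 Np by auto
      have "p * x = (real P1 - real d1) / real N" unfolding pN x_def using P1p Np by (simp add: field_simps)
      moreover have "(1 - p) * y = (real P2 - real d2) / real N" unfolding pN(2) y_def using P1p Np by (simp add: field_simps)
      ultimately have "p * x + (1 - p) * y = (real P1 - real d1) / real N + (real P2 - real d2) / real N"
        by simp
      also have "\<dots> = ((real P1 + real P2) - (real d1 + real d2)) / real N"
        by (simp add: diff_divide_distrib add_divide_distrib)
      also have "\<dots> = (real N - (real d1 + real d2)) / real N" unfolding rP12 ..
      also have "\<dots> \<le> real (a * t) / real N" using sumd Np by (intro divide_right_mono) auto
      also have "\<dots> = c" using kc Np by simp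
      finally show ?thesis .
    qed
    have e1: "\<beta> / real P1 ^ s * (real P1 ^ s - real d1 ^ s) = \<beta> * (1 - (1 - x) ^ s)"
      unfolding x_def using P1p by (simp add: field_simps power_divide)
    have e2: "(1 - \<beta>) / real P2 ^ (s+1) * (real P2 ^ (s+1) - real d2 ^ (s+1)) = (1 - \<beta>) * (1 - (1 - y) ^ (s+1))"
      unfolding y_def using P1p by (simp add: field_simps power_divide del: power_Suc)
    show "\<beta> / real P1 ^ s * (real P1 ^ s - real (card ({1..P1} - X)) ^ s)
       + (1 - \<beta>) / real P2 ^ (s + 1) * (real P2 ^ (s + 1) - real (card ({P1 + 1..P1 + P2} - X)) ^ (s + 1))
       \<le> 1 - (1 - r1) ^ s"
      unfolding d1_def[symmetric] d2_def[symmetric] e1 e2 using KI[OF xy bud] .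
  qed
  then show ?thesis using sig1 by simp
qed


theorem theorem4p2:
  fixes c \<epsilon> :: real
  assumes "c \<in> \<rat>" and "0 < c" and "c \<le> 1" and "0 < \<epsilon>"
  shows "\<exists>(E::nat set) (w::nat \<Rightarrow> real) (S::nat \<Rightarrow> nat set) (n::nat) (k::nat).
           n \<ge> 1 \<and> mc_instance E w S n \<and> real k = c * real n
         \<and> 0 < mc_lp_opt E w S n (real k)
         \<and> mc_opt E w S n k / mc_lp_opt E w S n (real k) \<le> (1 + \<epsilon>) * rho_mc c"
proof -
  obtain a b :: nat where b: "b \<noteq> 0" and cab: "\<bar>c\<bar> = real a / real b"
    using Rats_abs_nat_div_natE[OF assms(1)] by blast
  have cab': "c = real a / real b" using cab assms(2) by simp
  define s where "s = nat \<lfloor>1 / c\<rfloor>"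
  have s1: "s \<ge> 1" using s_bounds(1)[OF assms(2,3)] unfolding s_def by simp
  obtain t :: nat where tt: "real (s+1)^2 * (1 + \<epsilon>) / \<epsilon> < real t" using reals_Archimedean2 by blast
  have pos: "real (s+1)^2 * (1 + \<epsilon>) / \<epsilon> > 0" using assms(4) by simp
  have t1: "t \<ge> 1" using tt pos by simp
  have d: "real (s+1)^2 / real t \<le> \<epsilon> / (1 + \<epsilon>)"
  proof -
    have "real (s+1)^2 * (1 + \<epsilon>) < real t * \<epsilon>" using tt assms(4) by (simp add: divide_less_eq)
    then have "real (s+1)^2 * (1 + \<epsilon>) \<le> \<epsilon> * real t" by (simp add: mult.commute)
    then show ?thesis using t1 assms(4) by (simp add: divide_le_eq le_divide_eq mult.commute)
  qed
  show ?thesis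
  proof (cases "c = 1 / real s")
    case True
    have "rho_mc c = 1 - (1 - c) ^ s" unfolding rho_mc_def Let_def s_def[symmetric] using True by simp
    then show ?thesis using case1[OF assms(2,3) True s1 cab' b t1 d assms(4)] by simp
  next
    case False
    have ne: "c \<noteq> 1 / real (nat \<lfloor>1 / c\<rfloor>)" using False unfolding s_def .
    have cl: "1 / real (s + 1) < c" and cu: "c < 1 / real s"
      using rho_root(1,2)[OF assms(2,3) ne] unfolding s_def by auto
    obtain \<alpha> where al: "0 < \<alpha>" "\<alpha> < 1" "sigma_mc c \<alpha> s = sigma_mc c \<alpha> (s + 1)"
      and rh: "rho_mc c = 1 - sigma_mc c \<alpha> s"
      using rho_root(3)[OF assms(2,3) ne] unfolding s_def[symmetric] by blast
    show ?thesis using case2[OF s1 cl cu cab' b t1 d assms(4) al] rh by simp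
  qed
qed



end
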